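(* Let $L_1,L_2\in\mathcal L_n$. Then $L_1\preceq_B L_2$ if and only if $H(L_1)-H(L_2)$ is a (possibly empty) sum of contiguous positive T-blocks. Moreover, if $L_1$ is obtained from $L_2$ by a single contiguous decreasing intercalate switch of consecutive integers, i.e. there are $i,j\in[n-1]$ and $a\in[n-1]$ with $(L_2)_{i,j}=(L_2)_{i+1,j+1}=a+1$, $(L_2)_{i,j+1}=(L_2)_{i+1,j}=a$, while $(L_1)_{i,j}=(L_1)_{i+1,j+1}=a$, $(L_1)_{i,j+1}=(L_1)_{i+1,j}=a+1$ and $L_1,L_2$ agree in all other cells, then $L_2$ covers $L_1$ in $(\mathcal L_n,\preceq_B)$.
   Context: Let $[n]=\{1,\dots,n\}$. A Latin square of order $n$ is an $n\times n$ array with entries in $[n]$ in which each symbol occurs exactly once in each row and each column; $\mathcal L_n$ is the set of them. A hypermatrix of order $n$ is an integer array $A=(A_{i,j,k})_{i,j,k\in[n]}$. For $L\in\mathcal L_n$, $H(L)$ is the hypermatrix with $H(L)_{i,j,k}=1$ if $L_{i,j}=k$ and $0$ otherwise. For $i_1<i_2$, $j_1<j_2$, $k_1<k_2$ in $[n]$, the positive T-block on $\{i_1,i_2\}\times\{j_1,j_2\}\times\{k_1,k_2\}$ is the hypermatrix that is zero outside these eight positions, with entries $+1$ at $(i_1,j_1,k_1),(i_2,j_2,k_1),(i_1,j_2,k_2),(i_2,j_1,k_2)$ and $-1$ at $(i_1,j_2,k_1),(i_2,j_1,k_1),(i_1,j_1,k_2),(i_2,j_2,k_2)$; it is contiguous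 if $i_2=i_1+1$, $j_2=j_1+1$, $k_2=k_1+1$. For hypermatrices $A,B$ of order $n$, $A\preceq_B B$ means $A-B$ is a (possibly empty) sum of positive T-blocks (the Bruhat order); for Latin squares, $L_1\preceq_B L_2$ means $H(L_1)\preceq_B H(L_2)$. An element $y$ covers $x$ if $x\prec y$ and no $z$ satisfies $x\prec z\prec y$. *)

theory Defs
  imports Main
begin

text \<open>Latin squares of order n are represented as functions L :: nat => nat => nat;
  only the values on [n] x [n] are relevant (cells are indexed by 1..n).\<close>

type_synonym lsquare = "nat \<Rightarrow> nat \<Rightarrow> nat"
type_synonym hypermatrix = "nat \<Rightarrow> nat \<Rightarrow> nat \<Rightarrow> int"

definition latin_square :: "nat \<Rightarrow> lsquare \<Rightarrow> bool" where
  "latin_square n L \<longleftrightarrow>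
     (\<forall>i\<in>{1..n}. \<forall>j\<in>{1..n}. L i j \<in> {1..n}) \<and>
     (\<forall>i\<in>{1..n}. inj_on (\<lambda>j. L i j) {1..n}) \<and>
     (\<forall>j\<in>{1..n}. inj_on (\<lambda>i. L i j) {1..n})"

definition H :: "nat \<Rightarrow> lsquare \<Rightarrow> hypermatrix" where
  "H n L = (\<lambda>i j k. if i \<in> {1..n} \<and> j \<in> {1..n} \<and> k \<in> {1..n} \<and> L i j = k then 1 else 0)"

definition tblock :: "nat \<Rightarrow> nat \<Rightarrow> nat \<Rightarrow> nat \<Rightarrow> nat \<Rightarrow> nat \<Rightarrow> hypermatrix" where
  "tblock i1 i2 j1 j2 k1 k2 = (\<lambda>i j k.
     if (i, j, k) \<in> {(i1,j1,k1), (i2,j2,k1), (i1,j2,k2), (i2,j1,k2)} then 1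
     else if (i, j, k) \<in> {(i1,j2,k1), (i2,j1,k1), (i1,j1,k2), (i2,j2,k2)} then -1
     else 0)"

type_synonym tindex = "nat \<times> nat \<times> nat \<times> nat \<times> nat \<times> nat"

definition valid_tblock :: "nat \<Rightarrow> tindex \<Rightarrow> bool" where
  "valid_tblock n t = (case t of (i1, i2, j1, j2, k1, k2) \<Rightarrow>
     1 \<le> i1 \<and> i1 < i2 \<and> i2 \<le> n \<and> 1 \<le> j1 \<and> j1 < j2 \<and> j2 \<le> n \<and>
     1 \<le> k1 \<and> k1 < k2 \<and> k2 \<le> n)"

definition contiguous :: "tindex \<Rightarrow> bool" where
  "contiguous t = (case t of (i1, i2, j1, j2, k1, k2) \<Rightarrow>
     i2 = i1 + 1 \<and> j2 = j1 + 1 \<and> k2 = k1 + 1)"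

definition tblock_of :: "tindex \<Rightarrow> hypermatrix" where
  "tblock_of t = (case t of (i1, i2, j1, j2, k1, k2) \<Rightarrow> tblock i1 i2 j1 j2 k1 k2)"

definition sum_of_tblocks :: "nat \<Rightarrow> (tindex \<Rightarrow> bool) \<Rightarrow> hypermatrix \<Rightarrow> bool" where
  "sum_of_tblocks n P D \<longleftrightarrow>
     (\<exists>ts. (\<forall>t\<in>set ts. valid_tblock n t \<and> P t) \<and>
           (\<forall>i j k. D i j k = (\<Sum>t\<leftarrow>ts. tblock_of t i j k)))"

definition bruhat_le :: "nat \<Rightarrow> hypermatrix \<Rightarrow> hypermatrix \<Rightarrow> bool" where
  "bruhat_le n A B \<longleftrightarrow> sum_of_tblocks n (\<lambda>_. True) (\<lambda>i j k. A i j k - B i j k)"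

definition ls_bruhat_le :: "nat \<Rightarrow> lsquare \<Rightarrow> lsquare \<Rightarrow> bool" where
  "ls_bruhat_le n L1 L2 \<longleftrightarrow> bruhat_le n (H n L1) (H n L2)"

definition ls_bruhat_less :: "nat \<Rightarrow> lsquare \<Rightarrow> lsquare \<Rightarrow> bool" where
  "ls_bruhat_less n L1 L2 \<longleftrightarrow> ls_bruhat_le n L1 L2 \<and> H n L1 \<noteq> H n L2"

definition ls_covers :: "nat \<Rightarrow> lsquare \<Rightarrow> lsquare \<Rightarrow> bool" where
  "ls_covers n L2 L1 \<longleftrightarrow> ls_bruhat_less n L1 L2 \<and>
     \<not> (\<exists>L. latin_square n L \<and> ls_bruhat_less n L1 L \<and> ls_bruhat_less n L L2)"

definition contig_decr_switch :: "nat \<Rightarrow> lsquare \<Rightarrow> lsquare \<Rightarrow> bool" where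
  "contig_decr_switch n L1 L2 \<longleftrightarrow>
     (\<exists>i\<in>{1..n-1}. \<exists>j\<in>{1..n-1}. \<exists>a\<in>{1..n-1}.
        L2 i j = a + 1 \<and> L2 (i+1) (j+1) = a + 1 \<and> L2 i (j+1) = a \<and> L2 (i+1) j = a \<and>
        L1 i j = a \<and> L1 (i+1) (j+1) = a \<and> L1 i (j+1) = a + 1 \<and> L1 (i+1) j = a + 1 \<and>
        (\<forall>p\<in>{1..n}. \<forall>q\<in>{1..n}. (p, q) \<notin> {i, i+1} \<times> {j, j+1} \<longrightarrow> L1 p q = L2 p q))"

end

theory Submission
  imports Defs
begin

definition dv :: "nat \<Rightarrow> nat \<Rightarrow> nat \<Rightarrow> int" where
  "dv x y i = (if i = x then 1 else 0) - (if i = y then 1 else 0)"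

definition Dh :: "nat \<Rightarrow> nat \<Rightarrow> nat \<Rightarrow> nat \<Rightarrow> nat \<Rightarrow> nat \<Rightarrow> hypermatrix" where
  "Dh a b c e f g = (\<lambda>i j k. dv a b i * dv c e j * dv f g k)"

lemma tblock_fact:
  assumes "a \<noteq> b" "c \<noteq> e" "f \<noteq> g"
  shows "tblock a b c e f g = Dh a b c e f g"
proof (intro ext)
  fix i j k
  show "tblock a b c e f g i j k = Dh a b c e f g i j k"
    using assms unfolding tblock_def Dh_def dv_def
    by (cases "i = a"; cases "i = b"; cases "j = c"; cases "j = e"; cases "k = f"; cases "k = g") simp_all
qed

lemma dv_add: "dv a z i = dv a y i + dv y z i"
  unfolding dv_def by simp

lemma Dh_split1: "Dh a z c e f g = (\<lambda>i j k. Dh a y c e f g i j k + Dh y z c e f g i j k)"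
  unfolding Dh_def by (simp add: fun_eq_iff dv_add[of a z _ y] algebra_simps)
lemma Dh_split2: "Dh a b c z f g = (\<lambda>i j k. Dh a b c y f g i j k + Dh a b y z f g i j k)"
  unfolding Dh_def by (simp add: fun_eq_iff dv_add[of c z _ y] algebra_simps)
lemma Dh_split3: "Dh a b c e f z = (\<lambda>i j k. Dh a b c e f y i j k + Dh a b c e y z i j k)"
  unfolding Dh_def by (simp add: fun_eq_iff dv_add[of f z _ y] algebra_simps)

abbreviation CC where "CC n D \<equiv> sum_of_tblocks n contiguous D"

lemma CC_add: "CC n A \<Longrightarrow> CC n B \<Longrightarrow> CC n (\<lambda>i j k. A i j k + B i j k)"
  unfolding sum_of_tblocks_def
proof (elim exE conjE)
  fix ts1 ts2
  assume "\<forall>t\<in>set ts1. valid_tblock n t \<and> contiguous t"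
    "\<forall>i j k. A i j k = (\<Sum>t\<leftarrow>ts1. tblock_of t i j k)"
    "\<forall>t\<in>set ts2. valid_tblock n t \<and> contiguous t"
    "\<forall>i j k. B i j k = (\<Sum>t\<leftarrow>ts2. tblock_of t i j k)"
  then show "\<exists>ts. (\<forall>t\<in>set ts. valid_tblock n t \<and> contiguous t) \<and>
          (\<forall>i j k. A i j k + B i j k = (\<Sum>t\<leftarrow>ts. tblock_of t i j k))"
    by (intro exI[of _ "ts1 @ ts2"]) auto
qed

lemma CC_base:
  assumes "1 \<le> p" "p + 1 \<le> n" "1 \<le> q" "q + 1 \<le> n" "1 \<le> r" "r + 1 \<le> n"
  shows "CC n (Dh p (p+1) q (q+1) r (r+1))"
  unfolding sum_of_tblocks_def
  apply (rule exI[of _ "[(p,p+1,q,q+1,r,r+1)]"])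
  using assms by (simp add: valid_tblock_def contiguous_def tblock_of_def tblock_fact)

lemma CC_k:
  assumes "1 \<le> p" "p + 1 \<le> n" "1 \<le> q" "q + 1 \<le> n" "1 \<le> k1" "k1 < k2" "k2 \<le> n"
  shows "CC n (Dh p (p+1) q (q+1) k1 k2)"
  using assms
proof (induction k2)
  case 0 then show ?case by simp
next
  case (Suc m)
  show ?case
  proof (cases "m = k1")
    case True then show ?thesis using Suc.prems CC_base[of p n q k1] by simp
  next
    case False
    then have "CC n (Dh p (p+1) q (q+1) k1 m)" using Suc by simp
    moreover have "CC n (Dh p (p+1) q (q+1) m (Suc m))" using Suc.prems False CC_base[of p n q m] by simp
    ultimately show ?thesis unfolding Dh_split3[of p "p+1" q "q+1" k1 "Suc m" m] by (rule CC_add)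
  qed
qed

lemma CC_j:
  assumes "1 \<le> p" "p + 1 \<le> n" "1 \<le> j1" "j1 < j2" "j2 \<le> n" "1 \<le> k1" "k1 < k2" "k2 \<le> n"
  shows "CC n (Dh p (p+1) j1 j2 k1 k2)"
  using assms
proof (induction j2)
  case 0 then show ?case by simp
next
  case (Suc m)
  show ?case
  proof (cases "m = j1")
    case True then show ?thesis using Suc.prems CC_k[of p n j1 k1 k2] by simp
  next
    case False
    then have "CC n (Dh p (p+1) j1 m k1 k2)" using Suc by simp
    moreover have "CC n (Dh p (p+1) m (Suc m) k1 k2)" using Suc.prems False CC_k[of p n m k1 k2] by simp
    ultimately show ?thesis unfolding Dh_split2[of p "p+1" j1 "Suc m" k1 k2 m] by (rule CC_add)
  qed
qed

lemma CC_i: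
  assumes "1 \<le> i1" "i1 < i2" "i2 \<le> n" "1 \<le> j1" "j1 < j2" "j2 \<le> n" "1 \<le> k1" "k1 < k2" "k2 \<le> n"
  shows "CC n (Dh i1 i2 j1 j2 k1 k2)"
  using assms
proof (induction i2)
  case 0 then show ?case by simp
next
  case (Suc m)
  show ?case
  proof (cases "m = i1")
    case True then show ?thesis using Suc.prems CC_j[of i1 n j1 j2 k1 k2] by simp
  next
    case False
    then have "CC n (Dh i1 m j1 j2 k1 k2)" using Suc by simp
    moreover have "CC n (Dh m (Suc m) j1 j2 k1 k2)" using Suc.prems False CC_j[of m n j1 j2 k1 k2] by simp
    ultimately show ?thesis unfolding Dh_split1[of i1 "Suc m" j1 j2 k1 k2 m] by (rule CC_add)
  qed
qed

lemma CC_valid: "valid_tblock n t \<Longrightarrow> CC n (tblock_of t)"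
proof (cases t)
  case (fields i1 i2 j1 j2 k1 k2)
  assume "valid_tblock n t"
  then have v: "1 \<le> i1" "i1 < i2" "i2 \<le> n" "1 \<le> j1" "j1 < j2" "j2 \<le> n" "1 \<le> k1" "k1 < k2" "k2 \<le> n"
    using fields by (simp_all add: valid_tblock_def)
  have "tblock_of t = Dh i1 i2 j1 j2 k1 k2" using fields v by (simp add: tblock_of_def tblock_fact)
  then show ?thesis using CC_i[OF v] by simp
qed

lemma CC_list: "\<forall>t\<in>set ts. valid_tblock n t \<Longrightarrow> CC n (\<lambda>i j k. \<Sum>t\<leftarrow>ts. tblock_of t i j k)"
proof (induction ts)
  case Nil
  then show ?case unfolding sum_of_tblocks_def by (intro exI[of _ "[]"]) simp
next
  case (Cons t ts)
  have v: "valid_tblock n t" using Cons.prems by simp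
  have r: "CC n (\<lambda>i j k. \<Sum>t\<leftarrow>ts. tblock_of t i j k)" using Cons by simp
  have "CC n (\<lambda>i j k. tblock_of t i j k + (\<Sum>t\<leftarrow>ts. tblock_of t i j k))"
    by (rule CC_add[OF CC_valid[OF v] r])
  then show ?case by simp
qed

lemma part1:
  "bruhat_le n A B \<longleftrightarrow> sum_of_tblocks n contiguous (\<lambda>i j k. A i j k - B i j k)"
proof
  assume "bruhat_le n A B"
  then obtain ts where ts: "\<forall>t\<in>set ts. valid_tblock n t"
    "\<forall>i j k. A i j k - B i j k = (\<Sum>t\<leftarrow>ts. tblock_of t i j k)"
    unfolding bruhat_le_def sum_of_tblocks_def by auto
  have "(\<lambda>i j k. A i j k - B i j k) = (\<lambda>i j k. \<Sum>t\<leftarrow>ts. tblock_of t i j k)"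
    using ts(2) by (simp add: fun_eq_iff)
  then show "CC n (\<lambda>i j k. A i j k - B i j k)" using CC_list[OF ts(1)] by simp
next
  assume "CC n (\<lambda>i j k. A i j k - B i j k)"
  then show "bruhat_le n A B" unfolding bruhat_le_def sum_of_tblocks_def by blast
qed


definition F :: "nat \<Rightarrow> hypermatrix \<Rightarrow> int" where
  "F n A = (\<Sum>i\<in>{1..n}. \<Sum>j\<in>{1..n}. \<Sum>k\<in>{1..n}. A i j k * int (i*j*k))"

lemma F_add: "F n (\<lambda>i j k. A i j k + B i j k) = F n A + F n B"
  by (simp add: F_def distrib_right sum.distrib)

lemma F_list: "F n (\<lambda>i j k. \<Sum>t\<leftarrow>ts. g t i j k) = (\<Sum>t\<leftarrow>ts. F n (g t))"
proof (induction ts)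
  case Nil then show ?case by (simp add: F_def)
next
  case (Cons t ts)
  then show ?case using F_add[of n "g t" "\<lambda>i j k. \<Sum>t\<leftarrow>ts. g t i j k"] by simp
qed

lemma dv_sum:
  assumes "a \<in> {1..n}" "b \<in> {1..n}" "a \<noteq> b"
  shows "(\<Sum>i\<in>{1..n}. dv a b i * int i) = int a - int b"
proof -
  have "(\<Sum>i\<in>{1..n}. dv a b i * int i) =
     (\<Sum>i\<in>{1..n}. (if i = a then int a else 0) - (if i = b then int b else 0))"
    by (rule sum.cong) (auto simp: dv_def)
  also have "\<dots> = int a - int b"
    using assms by (simp add: sum_subtractf)
  finally show ?thesis .
qed

lemma sep3: "(\<Sum>i\<in>A. \<Sum>j\<in>B. \<Sum>k\<in>C. (x i::int) * (y j * z k)) = sum x A * (sum y B * sum z C)"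
proof -
  have "(\<Sum>k\<in>C. x i * (y j * z k)) = x i * (y j * sum z C)" for i j by (simp add: sum_distrib_left)
  moreover have "(\<Sum>j\<in>B. x i * (y j * s)) = x i * (sum y B * s)" for i s
    by (simp add: sum_distrib_left sum_distrib_right)
  moreover have "(\<Sum>i\<in>A. x i * t) = sum x A * t" for t by (simp add: sum_distrib_right)
  ultimately show ?thesis by simp
qed

lemma F_Dh:
  assumes "a \<in> {1..n}" "b \<in> {1..n}" "a \<noteq> b" "c \<in> {1..n}" "e \<in> {1..n}" "c \<noteq> e"
    "f \<in> {1..n}" "g \<in> {1..n}" "f \<noteq> g"
  shows "F n (Dh a b c e f g) = (int a - int b) * ((int c - int e) * (int f - int g))"
proof -
  have "F n (Dh a b c e f g) = (\<Sum>i\<in>{1..n}. \<Sum>j\<in>{1..n}. \<Sum>k\<in>{1..n}.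
      (dv a b i * int i) * ((dv c e j * int j) * (dv f g k * int k)))"
    unfolding F_def Dh_def by (simp add: algebra_simps)
  also have "\<dots> = (\<Sum>i\<in>{1..n}. dv a b i * int i) * ((\<Sum>j\<in>{1..n}. dv c e j * int j) *
       (\<Sum>k\<in>{1..n}. dv f g k * int k))"
    by (rule sep3)
  also have "\<dots> = (int a - int b) * ((int c - int e) * (int f - int g))"
    by (simp only: dv_sum[OF assms(1-3)] dv_sum[OF assms(4-6)] dv_sum[OF assms(7-9)])
  finally show ?thesis .
qed

lemma neg3: "(x::int) < 0 \<Longrightarrow> y < 0 \<Longrightarrow> z < 0 \<Longrightarrow> x * (y * z) \<le> -1"
proof -
  assume "x < 0" "y < 0" "z < 0"
  then have "y * z > 0" by (simp add: mult_neg_neg)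
  then have "x * (y * z) < 0" using \<open>x < 0\<close> by (simp add: mult_neg_pos)
  then show ?thesis by simp
qed

lemma F_block: "valid_tblock n t \<Longrightarrow> F n (tblock_of t) \<le> -1"
proof (cases t)
  case (fields i1 i2 j1 j2 k1 k2)
  assume v: "valid_tblock n t"
  then have "F n (tblock_of t) = (int i1 - int i2) * ((int j1 - int j2) * (int k1 - int k2))"
    using fields by (simp add: valid_tblock_def tblock_of_def tblock_fact F_Dh)
  also have "\<dots> \<le> -1" using v fields by (intro neg3) (auto simp: valid_tblock_def)
  finally show ?thesis .
qed

lemma F_contig: "1 \<le> i \<Longrightarrow> i + 1 \<le> n \<Longrightarrow> 1 \<le> j \<Longrightarrow> j + 1 \<le> n \<Longrightarrow> 1 \<le> a \<Longrightarrow> a + 1 \<le> n \<Longrightarrow>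
  F n (tblock_of (i, i+1, j, j+1, a, a+1)) = -1"
  by (simp add: tblock_of_def tblock_fact F_Dh)

lemma F_sum_le: "\<forall>t\<in>set ts. valid_tblock n t \<Longrightarrow> (\<Sum>t\<leftarrow>ts. F n (tblock_of t)) \<le> - int (length ts)"
proof (induction ts)
  case Nil then show ?case by simp
next
  case (Cons t ts)
  then show ?case using F_block[of n t] by simp
qed

lemma F_bruhat:
  assumes "bruhat_le n A B" "A \<noteq> B"
  shows "F n (\<lambda>i j k. A i j k - B i j k) \<le> -1"
proof -
  obtain ts where ts: "\<forall>t\<in>set ts. valid_tblock n t"
    "\<forall>i j k. A i j k - B i j k = (\<Sum>t\<leftarrow>ts. tblock_of t i j k)"
    using assms(1) unfolding bruhat_le_def sum_of_tblocks_def by auto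
  have eq: "(\<lambda>i j k. A i j k - B i j k) = (\<lambda>i j k. \<Sum>t\<leftarrow>ts. tblock_of t i j k)"
    using ts(2) by auto
  have "ts \<noteq> []"
  proof
    assume "ts = []"
    then have "\<forall>i j k. A i j k = B i j k" using ts(2) by simp
    then show False using assms(2) by (auto simp: fun_eq_iff)
  qed
  then have "- int (length ts) \<le> -1" by (cases ts) auto
  then show ?thesis unfolding eq F_list using F_sum_le[OF ts(1)] by linarith
qed

lemma H_val: "p \<in> {1..n} \<Longrightarrow> q \<in> {1..n} \<Longrightarrow> L p q \<in> {1..n} \<Longrightarrow>
  H n L p q k = (if k = L p q then 1 else 0)"
  by (auto simp: H_def)

lemma switch_diff:
  assumes "contig_decr_switch n L1 L2"
  shows "\<exists>i j a. 1 \<le> i \<and> i + 1 \<le> n \<and> 1 \<le> j \<and> j + 1 \<le> n \<and> 1 \<le> a \<and> a + 1 \<le> n \<and>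
     (\<forall>p q k. H n L1 p q k - H n L2 p q k = tblock_of (i, i+1, j, j+1, a, a+1) p q k)"
proof -
  obtain i j a where ij: "i\<in>{1..n-1}" "j\<in>{1..n-1}" "a\<in>{1..n-1}" and
    s: "L2 i j = a + 1" "L2 (i+1) (j+1) = a + 1" "L2 i (j+1) = a" "L2 (i+1) j = a"
        "L1 i j = a" "L1 (i+1) (j+1) = a" "L1 i (j+1) = a + 1" "L1 (i+1) j = a + 1"
    and o: "\<forall>p\<in>{1..n}. \<forall>q\<in>{1..n}. (p, q) \<notin> {i, i+1} \<times> {j, j+1} \<longrightarrow> L1 p q = L2 p q"
    using assms unfolding contig_decr_switch_def by blast
  have rng: "i \<in> {1..n}" "i+1 \<in> {1..n}" "j \<in> {1..n}" "j+1 \<in> {1..n}" using ij by auto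
  have tb: "tblock_of (i, i+1, j, j+1, a, a+1) = Dh i (i+1) j (j+1) a (a+1)"
    by (simp add: tblock_of_def tblock_fact)
  have "H n L1 p q k - H n L2 p q k = Dh i (i+1) j (j+1) a (a+1) p q k" for p q k
  proof (cases "p \<in> {1..n} \<and> q \<in> {1..n} \<and> (p, q) \<notin> {i, i+1} \<times> {j, j+1}")
    case True
    then have "L1 p q = L2 p q" using o by blast
    then have "H n L1 p q k = H n L2 p q k" by (simp add: H_def)
    moreover have "Dh i (i+1) j (j+1) a (a+1) p q k = 0"
      using True by (auto simp: Dh_def dv_def)
    ultimately show ?thesis by simp
  next
    case False
    then consider "p \<notin> {1..n}" | "q \<notin> {1..n}" | "p = i" "q = j" | "p = i" "q = j+1"
      | "p = i+1" "q = j" | "p = i+1" "q = j+1" by blast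
    then show ?thesis
    proof cases
      case 1
      then have "p \<noteq> i" "p \<noteq> i+1" using rng by auto
      then show ?thesis using 1 by (auto simp: H_def Dh_def dv_def)
    next
      case 2
      then have "q \<noteq> j" "q \<noteq> j+1" using rng by auto
      then show ?thesis using 2 by (auto simp: H_def Dh_def dv_def)
    next
      case 3
      have a1: "a \<in> {1..n}" "a+1 \<in> {1..n}" using ij by auto
      have "H n L1 p q k = (if k = a then 1 else 0)"
        using H_val[of p n q L1 k] 3 rng s a1 by simp
      moreover have "H n L2 p q k = (if k = a+1 then 1 else 0)"
        using H_val[of p n q L2 k] 3 rng s a1 by simp
      moreover have "Dh i (i+1) j (j+1) a (a+1) p q k =  dv a (a+1) k"
        using 3 by (simp add: Dh_def dv_def)
      ultimately show ?thesis by (simp add: dv_def)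
    next
      case 4
      have a1: "a+1 \<in> {1..n}" "a \<in> {1..n}" using ij by auto
      have "H n L1 p q k = (if k = a+1 then 1 else 0)"
        using H_val[of p n q L1 k] 4 rng s a1 by simp
      moreover have "H n L2 p q k = (if k = a then 1 else 0)"
        using H_val[of p n q L2 k] 4 rng s a1 by simp
      moreover have "Dh i (i+1) j (j+1) a (a+1) p q k = - dv a (a+1) k"
        using 4 by (simp add: Dh_def dv_def)
      ultimately show ?thesis by (simp add: dv_def)
    next
      case 5
      have a1: "a+1 \<in> {1..n}" "a \<in> {1..n}" using ij by auto
      have "H n L1 p q k = (if k = a+1 then 1 else 0)"
        using H_val[of p n q L1 k] 5 rng s a1 by simp
      moreover have "H n L2 p q k = (if k = a then 1 else 0)"
        using H_val[of p n q L2 k] 5 rng s a1 by simp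
      moreover have "Dh i (i+1) j (j+1) a (a+1) p q k = - dv a (a+1) k"
        using 5 by (simp add: Dh_def dv_def)
      ultimately show ?thesis by (simp add: dv_def)
    next
      case 6
      have a1: "a \<in> {1..n}" "a+1 \<in> {1..n}" using ij by auto
      have "H n L1 p q k = (if k = a then 1 else 0)"
        using H_val[of p n q L1 k] 6 rng s a1 by simp
      moreover have "H n L2 p q k = (if k = a+1 then 1 else 0)"
        using H_val[of p n q L2 k] 6 rng s a1 by simp
      moreover have "Dh i (i+1) j (j+1) a (a+1) p q k =  dv a (a+1) k"
        using 6 by (simp add: Dh_def dv_def)
      ultimately show ?thesis by (simp add: dv_def)
    qed
  qed
  then have "H n L1 p q k - H n L2 p q k = tblock_of (i, i+1, j, j+1, a, a+1) p q k" for p q k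
    using tb by simp
  then show ?thesis using ij by (intro exI[of _ i] exI[of _ j] exI[of _ a]) auto
qed

theorem mainTheorem2:
  fixes n :: nat and L1 L2 :: lsquare
  assumes "latin_square n L1" and "latin_square n L2"
  shows "(ls_bruhat_le n L1 L2 \<longleftrightarrow>
            sum_of_tblocks n contiguous (\<lambda>i j k. H n L1 i j k - H n L2 i j k))
         \<and> (contig_decr_switch n L1 L2 \<longrightarrow> ls_covers n L2 L1)"
proof (intro conjI impI)
  show "ls_bruhat_le n L1 L2 \<longleftrightarrow>
            sum_of_tblocks n contiguous (\<lambda>i j k. H n L1 i j k - H n L2 i j k)"
    unfolding ls_bruhat_le_def by (rule part1)
next
  assume "contig_decr_switch n L1 L2"
  from switch_diff[OF this] obtain i j a where r: "1 \<le> i" "i + 1 \<le> n" "1 \<le> j" "j + 1 \<le> n"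
     "1 \<le> a" "a + 1 \<le> n"
    and d: "\<forall>p q k. H n L1 p q k - H n L2 p q k = tblock_of (i, i+1, j, j+1, a, a+1) p q k"
    by blast
  define T where "T = (i, i+1, j, j+1, a, a+1)"
  have vT: "valid_tblock n T" using r unfolding T_def valid_tblock_def by simp
  have dT: "\<forall>p q k. H n L1 p q k - H n L2 p q k = (\<Sum>t\<leftarrow>[T]. tblock_of t p q k)"
    using d unfolding T_def by simp
  have le: "ls_bruhat_le n L1 L2"
    unfolding ls_bruhat_le_def bruhat_le_def sum_of_tblocks_def
    apply (rule exI[of _ "[T]"])
    using vT dT by simp
  have one: "H n L1 i j a - H n L2 i j a = 1"
    using d by (simp add: tblock_of_def tblock_def)
  have ne: "H n L1 \<noteq> H n L2"
  proof
    assume "H n L1 = H n L2"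
    then show False using one by simp
  qed
  have fe: "(\<lambda>p q k. H n L1 p q k - H n L2 p q k) = tblock_of (i, i+1, j, j+1, a, a+1)"
    using d by (simp add: fun_eq_iff)
  have Fd: "F n (\<lambda>p q k. H n L1 p q k - H n L2 p q k) = -1"
    unfolding fe using F_contig[OF r] .
  show "ls_covers n L2 L1"
    unfolding ls_covers_def
  proof (intro conjI notI)
    show "ls_bruhat_less n L1 L2" unfolding ls_bruhat_less_def using le ne by simp
  next
    assume "\<exists>L. latin_square n L \<and> ls_bruhat_less n L1 L \<and> ls_bruhat_less n L L2"
    then obtain L where l1: "ls_bruhat_less n L1 L" and l2: "ls_bruhat_less n L L2" by blast
    have b1: "bruhat_le n (H n L1) (H n L)" "H n L1 \<noteq> H n L"
      using l1 unfolding ls_bruhat_less_def ls_bruhat_le_def by simp_all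
    have b2: "bruhat_le n (H n L) (H n L2)" "H n L \<noteq> H n L2"
      using l2 unfolding ls_bruhat_less_def ls_bruhat_le_def by simp_all
    have f1: "F n (\<lambda>p q k. H n L1 p q k - H n L p q k) \<le> -1" by (rule F_bruhat[OF b1])
    have f2: "F n (\<lambda>p q k. H n L p q k - H n L2 p q k) \<le> -1" by (rule F_bruhat[OF b2])
    have eq: "(\<lambda>p q k. H n L1 p q k - H n L2 p q k) =
        (\<lambda>p q k. (H n L1 p q k - H n L p q k) + (H n L p q k - H n L2 p q k))"
      by (simp add: fun_eq_iff)
    have "F n (\<lambda>p q k. H n L1 p q k - H n L2 p q k) =
       F n (\<lambda>p q k. H n L1 p q k - H n L p q k) + F n (\<lambda>p q k. H n L p q k - H n L2 p q k)"
      unfolding eq by (rule F_add)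
    then show False using f1 f2 Fd by linarith
  qed
qed

end
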